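(* Consider the recursive network formation model with the utility function described in the context. If $$b_1-b_2+\gamma b_2 \le c < b_1 \quad\text{and}\quad c_0 < (1-\gamma)(b_2-b_3),$$ then the resulting topology is a star: starting from a single node, for every $n\ge 1$, the pairwise stable network reached after the $n$-th node has entered is a star on $n$ nodes (one center adjacent to all other nodes, and no other links), irrespective of the random order in which nodes are selected to move.
   Context: Networks are finite simple undirected graphs whose vertices (nodes) are self-interested agents. Parameters: benefits $b_1>b_2>b_3>b_4>\dots>0$, where $b_i$ is the benefit a node obtains from a node at distance $i$; a link cost $c$ per immediate neighbor; an intermediation fraction $\gamma$ with $0\le\gamma<1$; and a network entry factor $c_0$. Notation: $N$ is the set of nodes currently in the network, $d_j$ the degree of $j$, and $l(j,w)$ the graph distance. A node $x$ is essential for a pair $y,z$ (with $x\notin\{y,z\}$) if $x$ lies on every path joining $y$ and $z$. Write $E(y,z)$ for the set of nodes essential for $y,z$ and $e(y,z)=|E(y,z)|$. Only pairs joined by a path contribute to the sums below. Utility of node $j$ in network $g$: $$u_j(g)=-c_0\,d_{T(j)}\mathbf 1_{\{j=\mathrm{NE}\}}+d_j(b_1-c)+\sum_{w\in N,\ l(j,w)>1}b_{l(j,w)}-\sum_{w\in N,\ E(j,w)\ne\emptyset}\gamma\, b_{l(j,w)}+\sum_{y,z\in N,\ j\in E(y,z)}\frac{\gamma}{e(y,z)}\,2\,b_{l(y,z)}.$$ Here $\mathbf 1_{\{j=\mathrm{NE}\}}=1$ exactly when $j$ is a newly entering node evaluating the creation of its first link. $T(j)$ is the existing node to which $j$ forms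 that first link, and $d_{T(j)}$ is that node's degree before the link. The network before entry gives the entering node utility $0$. Pairwise stability: $g$ is pairwise stable if (a) for every link $(i,j)\in g$, $u_i(g\setminus\{(i,j)\})\le u_i(g)$ and $u_j(g\setminus\{(i,j)\})\le u_j(g)$; and (b) for every non-link $(i,j)\notin g$, if $u_i(g\cup\{(i,j)\})>u_i(g)$ then $u_j(g\cup\{(i,j)\})<u_j(g)$. Recursive model of network formation: - The process starts with a single node. - When the current network of $n-1$ nodes is pairwise stable, a new node considers entering. Its options are to stay out or to propose a link to one existing node. The link forms iff the receiving node's utility does not decrease. No existing node can link to the newcomer before it has formed this first link. - After entry, nodes are repeatedly chosen at random to move. A chosen node plays a myopic best response among three options: create a link with a non-neighbor (the link forms only if the other node's utility does not decrease, which the proposer anticipates); delete a link with a neighbor (unilaterally); or keep the status quo. It alters a link only if this strictly increases its current utility. - This continues until the network is pairwise stable; then the next node considers entering, and so on. "The resulting topology is X" means: for every number $n$ of nodes, every pairwise stable network reached after the $n$-th node has entered is a network of topology X on $n$ nodes, irrespective of the random choices. *)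

theory Defs
  imports Main "HOL-Library.Library"
begin

text \<open>Networks on the node set {0..<n}; a network is a set of undirected links,
each link being a two-element set of nodes.\<close>

definition walk :: "nat set set \<Rightarrow> nat \<Rightarrow> nat \<Rightarrow> nat list \<Rightarrow> bool" where
  "walk g y z xs \<longleftrightarrow> xs \<noteq> [] \<and> hd xs = y \<and> last xs = z \<and>
     successively (\<lambda>u v. {u, v} \<in> g) xs"

definition joined :: "nat set set \<Rightarrow> nat \<Rightarrow> nat \<Rightarrow> bool" where
  "joined g y z \<longleftrightarrow> (\<exists>xs. walk g y z xs)"

definition gdist :: "nat set set \<Rightarrow> nat \<Rightarrow> nat \<Rightarrow> nat" where
  "gdist g y z = (LEAST k. \<exists>xs. walk g y z xs \<and> length xs = Suc k)"

definition degree :: "nat set set \<Rightarrow> nat \<Rightarrow> nat" where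
  "degree g j = card {k. {j, k} \<in> g}"

definition essential_set :: "nat \<Rightarrow> nat set set \<Rightarrow> nat \<Rightarrow> nat \<Rightarrow> nat set" where
  "essential_set n g y z = {x. x < n \<and> x \<noteq> y \<and> x \<noteq> z \<and>
      (\<forall>xs. walk g y z xs \<longrightarrow> x \<in> set xs)}"

text \<open>Utility of node j in network g on node set {0..<n}, without the entry term.
  The intermediation sum runs over unordered pairs {y,z} (encoded as y < z).\<close>
definition util :: "(nat \<Rightarrow> real) \<Rightarrow> real \<Rightarrow> real \<Rightarrow> nat \<Rightarrow> nat set set \<Rightarrow> nat \<Rightarrow> real" where
  "util b c \<gamma> n g j =
     real (degree g j) * (b 1 - c)
     + (\<Sum>w\<in>{w. w < n \<and> joined g j w \<and> gdist g j w > 1}. b (gdist g j w))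
     - (\<Sum>w\<in>{w. w < n \<and> joined g j w \<and> essential_set n g j w \<noteq> {}}. \<gamma> * b (gdist g j w))
     + (\<Sum>(y, z)\<in>{(y, z). y < z \<and> z < n \<and> joined g y z \<and> j \<in> essential_set n g y z}.
          \<gamma> / real (card (essential_set n g y z)) * 2 * b (gdist g y z))"

definition entry_util :: "(nat \<Rightarrow> real) \<Rightarrow> real \<Rightarrow> real \<Rightarrow> real \<Rightarrow> nat \<Rightarrow> nat set set \<Rightarrow> nat \<Rightarrow> real" where
  "entry_util b c \<gamma> c0 n g T =
     - c0 * real (degree g T) + util b c \<gamma> (Suc n) (insert {n, T} g) n"

definition pairwise_stable :: "(nat \<Rightarrow> real) \<Rightarrow> real \<Rightarrow> real \<Rightarrow> nat \<Rightarrow> nat set set \<Rightarrow> bool" where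
  "pairwise_stable b c \<gamma> n g \<longleftrightarrow>
     (\<forall>i j. {i, j} \<in> g \<longrightarrow>
        util b c \<gamma> n (g - {{i, j}}) i \<le> util b c \<gamma> n g i \<and>
        util b c \<gamma> n (g - {{i, j}}) j \<le> util b c \<gamma> n g j) \<and>
     (\<forall>i j. i < n \<longrightarrow> j < n \<longrightarrow> i \<noteq> j \<longrightarrow> {i, j} \<notin> g \<longrightarrow>
        util b c \<gamma> n (insert {i, j} g) i > util b c \<gamma> n g i \<longrightarrow>
        util b c \<gamma> n (insert {i, j} g) j < util b c \<gamma> n g j)"

definition options :: "(nat \<Rightarrow> real) \<Rightarrow> real \<Rightarrow> real \<Rightarrow> nat \<Rightarrow> nat set set \<Rightarrow> nat \<Rightarrow> nat set set set" where
  "options b c \<gamma> n g i =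
     {g}
     \<union> {insert {i, k} g | k. k < n \<and> k \<noteq> i \<and> {i, k} \<notin> g \<and>
            util b c \<gamma> n (insert {i, k} g) k \<ge> util b c \<gamma> n g k}
     \<union> {g - {{i, k}} | k. {i, k} \<in> g}"

definition br_move :: "(nat \<Rightarrow> real) \<Rightarrow> real \<Rightarrow> real \<Rightarrow> nat \<Rightarrow> nat set set \<Rightarrow> nat set set \<Rightarrow> bool" where
  "br_move b c \<gamma> n g g' \<longleftrightarrow>
     (\<exists>i < n. g' \<in> options b c \<gamma> n g i \<and> util b c \<gamma> n g' i > util b c \<gamma> n g i \<and>
        (\<forall>h \<in> options b c \<gamma> n g i. util b c \<gamma> n h i \<le> util b c \<gamma> n g' i))"

definition entry_feasible :: "(nat \<Rightarrow> real) \<Rightarrow> real \<Rightarrow> real \<Rightarrow> nat \<Rightarrow> nat set set \<Rightarrow> nat \<Rightarrow> bool" where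
  "entry_feasible b c \<gamma> n g T \<longleftrightarrow> T < n \<and>
     util b c \<gamma> (Suc n) (insert {n, T} g) T \<ge> util b c \<gamma> n g T"

inductive_set reachable :: "(nat \<Rightarrow> real) \<Rightarrow> real \<Rightarrow> real \<Rightarrow> real \<Rightarrow> (nat \<times> nat set set) set"
  for b c \<gamma> c0 where
  start: "(1, {}) \<in> reachable b c \<gamma> c0"
| move: "\<lbrakk>(n, g) \<in> reachable b c \<gamma> c0; \<not> pairwise_stable b c \<gamma> n g; br_move b c \<gamma> n g g'\<rbrakk>
         \<Longrightarrow> (n, g') \<in> reachable b c \<gamma> c0"
| enter: "\<lbrakk>(n, g) \<in> reachable b c \<gamma> c0; pairwise_stable b c \<gamma> n g;
           entry_feasible b c \<gamma> n g T;
           entry_util b c \<gamma> c0 n g T \<ge> 0;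
           \<forall>T'. entry_feasible b c \<gamma> n g T' \<longrightarrow> entry_util b c \<gamma> c0 n g T' \<le> entry_util b c \<gamma> c0 n g T\<rbrakk>
         \<Longrightarrow> (Suc n, insert {n, T} g) \<in> reachable b c \<gamma> c0"

definition is_star :: "nat \<Rightarrow> nat set set \<Rightarrow> bool" where
  "is_star n g \<longleftrightarrow> (\<exists>ctr < n. g = {{ctr, k} | k. k < n \<and> k \<noteq> ctr})"

end

theory Submission
  imports Defs
begin



lemma walk_single: "walk g y y [y]" by (simp add: walk_def)
lemma walk_edge: "{y,z} \<in> g \<Longrightarrow> walk g y z [y,z]" by (simp add: walk_def)
lemma walk_2: "{y,x} \<in> g \<Longrightarrow> {x,z} \<in> g \<Longrightarrow> walk g y z [y,x,z]" by (simp add: walk_def)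
lemma walk_3: "{y,x} \<in> g \<Longrightarrow> {x,u} \<in> g \<Longrightarrow> {u,z} \<in> g \<Longrightarrow> walk g y z [y,x,u,z]"
  by (simp add: walk_def)

lemma walk_mono: "walk g y z xs \<Longrightarrow> g \<subseteq> h \<Longrightarrow> walk h y z xs"
  unfolding walk_def using successively_mono by (metis (no_types, lifting) subsetD)

lemma walk_rev: "walk g y z xs \<Longrightarrow> walk g z y (rev xs)"
  unfolding walk_def by (auto simp: hd_rev last_rev insert_commute)

lemma walk_start: "walk g y z xs \<Longrightarrow> y \<noteq> z \<Longrightarrow> \<exists>v rest. xs = y # v # rest \<and> {y,v} \<in> g"
  unfolding walk_def by (cases xs rule: remdups_adj.cases) auto

lemma walk_start_nb: "walk g y z xs \<Longrightarrow> y \<noteq> z \<Longrightarrow> (\<And>k. {y,k} \<in> g \<Longrightarrow> k = ctr) \<Longrightarrow> ctr \<in> set xs"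
  using walk_start by fastforce

lemma walk_end_nb: "walk g y z xs \<Longrightarrow> y \<noteq> z \<Longrightarrow> (\<And>k. {z,k} \<in> g \<Longrightarrow> k = ctr) \<Longrightarrow> ctr \<in> set xs"
  using walk_start_nb[OF walk_rev, of g y z xs ctr] by auto

lemma joined_nb1: "joined g y z \<Longrightarrow> y \<noteq> z \<Longrightarrow> \<exists>k. {y,k} \<in> g"
  unfolding joined_def using walk_start by blast
lemma joined_nb2: "joined g y z \<Longrightarrow> y \<noteq> z \<Longrightarrow> \<exists>k. {z,k} \<in> g"
  unfolding joined_def using walk_start walk_rev by blast

lemma succ_nb: "successively (\<lambda>u v. {u,v} \<in> g) xs \<Longrightarrow> x \<in> set xs \<Longrightarrow> length xs \<ge> 2 \<Longrightarrow> \<exists>k. {x,k} \<in> g"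
proof (induction xs rule: induct_list012)
  case (3 a b rest)
  show ?case
  proof (cases "x = a")
    case True then show ?thesis using 3 by auto
  next
    case False
    then have "x \<in> set (b # rest)" using 3 by auto
    show ?thesis
    proof (cases "x = b")
      case True then show ?thesis using 3 by (auto simp: insert_commute)
    next
      case False
      then have "rest \<noteq> []" using \<open>x \<in> set (b # rest)\<close> by auto
      then show ?thesis using 3 \<open>x \<in> set (b # rest)\<close> by (cases rest) auto
    qed
  qed
qed auto

lemma walk_isolated: "walk g y z xs \<Longrightarrow> x \<in> set xs \<Longrightarrow> \<not>(\<exists>k. {x,k} \<in> g) \<Longrightarrow> xs = [x]"
  unfolding walk_def using succ_nb[of g xs x]
  by (cases xs rule: remdups_adj.cases) auto

lemma gdist_walk: "joined g y z \<Longrightarrow> \<exists>xs. walk g y z xs \<and> length xs = Suc (gdist g y z)"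
proof -
  assume "joined g y z"
  then obtain xs where w: "walk g y z xs" unfolding joined_def by blast
  then have xs: "xs \<noteq> []" by (simp add: walk_def)
  then have "\<exists>k. \<exists>xs. walk g y z xs \<and> length xs = Suc k" using w by (intro exI[of _ "length xs - 1"]) auto
  then show ?thesis unfolding gdist_def by (rule LeastI_ex)
qed

lemma gdist_le: "walk g y z xs \<Longrightarrow> gdist g y z \<le> length xs - 1"
  unfolding gdist_def by (rule Least_le) (auto simp: walk_def)

lemma gdist_self: "gdist g y y = 0"
  using gdist_le[OF walk_single, of g y] by simp

lemma gdist_cases:
  assumes "joined g y z"
  shows "(gdist g y z = 0 \<longrightarrow> y = z) \<and> (gdist g y z = 1 \<longrightarrow> {y,z} \<in> g)
       \<and> (gdist g y z = 2 \<longrightarrow> (\<exists>x. {y,x} \<in> g \<and> {x,z} \<in> g))"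
proof -
  obtain xs where w: "walk g y z xs" and l: "length xs = Suc (gdist g y z)"
    using gdist_walk[OF assms] by blast
  show ?thesis
  proof (intro conjI impI)
    assume "gdist g y z = 0" then show "y = z" using w l by (auto simp: walk_def length_Suc_conv)
  next
    assume "gdist g y z = 1" then show "{y,z} \<in> g" using w l
      by (auto simp: walk_def length_Suc_conv)
  next
    assume "gdist g y z = 2" then show "\<exists>x. {y,x} \<in> g \<and> {x,z} \<in> g" using w l
      by (auto simp: walk_def length_Suc_conv numeral_2_eq_2)
  qed
qed

lemma gdist_eq2: "{y,x} \<in> g \<Longrightarrow> {x,z} \<in> g \<Longrightarrow> y \<noteq> z \<Longrightarrow> {y,z} \<notin> g \<Longrightarrow> gdist g y z = 2"
proof -
  assume a: "{y,x} \<in> g" "{x,z} \<in> g" "y \<noteq> z" "{y,z} \<notin> g"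
  have w: "walk g y z [y,x,z]" by (rule walk_2[OF a(1,2)])
  then have j: "joined g y z" unfolding joined_def by blast
  have "gdist g y z \<le> 2" using gdist_le[OF w] by simp
  then show ?thesis using gdist_cases[OF j] a by (cases "gdist g y z") (auto simp: numeral_2_eq_2 less_Suc_eq_le le_Suc_eq)
qed

lemma ess_sub_walk: "walk g y z xs \<Longrightarrow> essential_set m g y z \<subseteq> set xs - {y,z}"
  unfolding essential_set_def by auto

lemma ess_gdist: "joined g y z \<Longrightarrow> essential_set m g y z \<noteq> {} \<Longrightarrow> gdist g y z > 1"
proof (rule ccontr)
  assume j: "joined g y z" and e: "essential_set m g y z \<noteq> {}" and "\<not> gdist g y z > 1"
  then have d: "gdist g y z \<le> 1" by simp
  obtain xs where w: "walk g y z xs" and l: "length xs = Suc (gdist g y z)"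
    using gdist_walk[OF j] by blast
  have "gdist g y z = 0 \<or> gdist g y z = 1" using d by auto
  then have "set xs \<subseteq> {y,z}" using w l by (auto simp: walk_def length_Suc_conv)
  then show False using ess_sub_walk[OF w, of m] e by auto
qed




definition gstar :: "nat \<Rightarrow> nat set \<Rightarrow> nat set set" where
  "gstar ctr L = {{ctr,k} | k. k \<in> L}"

definition lpairs :: "nat set \<Rightarrow> (nat \<times> nat) set" where
  "lpairs L = {(y,z). y < z \<and> y \<in> L \<and> z \<in> L}"

lemma gstar_edge: "ctr \<notin> L \<Longrightarrow> {v,k} \<in> gstar ctr L \<longleftrightarrow> (v = ctr \<and> k \<in> L) \<or> (v \<in> L \<and> k = ctr)"
  unfolding gstar_def by (auto simp: doubleton_eq_iff)

lemma leafpair: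
  assumes "{y,ctr} \<in> g" "{ctr,z} \<in> g" "y \<noteq> z" "{y,z} \<notin> g" "ctr < m" "ctr \<noteq> y" "ctr \<noteq> z"
    "\<And>k. {z,k} \<in> g \<Longrightarrow> k = ctr"
  shows "joined g y z" "essential_set m g y z = {ctr}" "gdist g y z = 2"
proof -
  have w: "walk g y z [y,ctr,z]" by (rule walk_2[OF assms(1,2)])
  then show "joined g y z" unfolding joined_def by blast
  have "ctr \<in> essential_set m g y z"
    unfolding essential_set_def using assms walk_end_nb by blast
  then show "essential_set m g y z = {ctr}" using ess_sub_walk[OF w, of m] by auto
  show "gdist g y z = 2" by (rule gdist_eq2[OF assms(1,2,3,4)])
qed

lemma nonessential:
  assumes "x \<noteq> ctr" "gstar ctr L \<subseteq> g" "ctr \<notin> L"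
    "\<And>v k. {v,k} \<in> g \<Longrightarrow> v \<noteq> x \<Longrightarrow> v \<in> insert ctr L" "joined g y z" "y \<noteq> z"
  shows "x \<notin> essential_set m g y z"
proof
  assume xe: "x \<in> essential_set m g y z"
  then have xy: "x \<noteq> y" "x \<noteq> z" unfolding essential_set_def by auto
  have y: "y \<in> insert ctr L" using joined_nb1[OF assms(5,6)] assms(4) xy by blast
  have z: "z \<in> insert ctr L" using joined_nb2[OF assms(5,6)] assms(4) xy by blast
  have ed: "\<And>k. k \<in> L \<Longrightarrow> {ctr,k} \<in> g" "\<And>k. k \<in> L \<Longrightarrow> {k,ctr} \<in> g"
    using assms(2,3) gstar_edge by blast+
  have "\<exists>xs. walk g y z xs \<and> x \<notin> set xs"
  proof (cases "y = ctr")
    case True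
    then have "z \<in> L" using z assms(6) by auto
    then show ?thesis using True walk_edge[OF ed(1)] assms(1) xy by fastforce
  next
    case False
    then have yL: "y \<in> L" using y by auto
    show ?thesis
    proof (cases "z = ctr")
      case True
      then show ?thesis using yL walk_edge[OF ed(2)] assms(1) xy by fastforce
    next
      case False
      then have "z \<in> L" using z by auto
      then show ?thesis using yL walk_2[OF ed(2) ed(1)] assms(1) xy by fastforce
    qed
  qed
  then show False using xe unfolding essential_set_def by blast
qed

lemma util_isolated:
  assumes "\<not>(\<exists>k. {x,k} \<in> g)"
  shows "util b c \<gamma> m g x = 0"
proof -
  have deg: "degree g x = 0" unfolding degree_def using assms by simp
  have j: "\<And>w. joined g x w \<Longrightarrow> w = x" using joined_nb1 assms by blast
  have s2: "{w. w < m \<and> joined g x w \<and> gdist g x w > 1} = {}" by (auto dest: j simp: gdist_self)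
  have s3: "{w. w < m \<and> joined g x w \<and> essential_set m g x w \<noteq> {}} = {}"
    using s2 ess_gdist by blast
  have s4: "{(y, z). y < z \<and> z < m \<and> joined g y z \<and> x \<in> essential_set m g y z} = {}"
  proof -
    { fix y z assume "y < z" "joined g y z" "x \<in> essential_set m g y z"
      then obtain xs where w: "walk g y z xs" unfolding joined_def by blast
      then have "x \<in> set xs" using \<open>x \<in> essential_set m g y z\<close> unfolding essential_set_def by blast
      then have "xs = [x]" using walk_isolated[OF w _ assms] by blast
      then have False using w \<open>y < z\<close> by (simp add: walk_def) }
    then show ?thesis by auto
  qed
  show ?thesis unfolding util_def deg s2 s3 s4 by simp
qed

lemma util_center:
  assumes m: "ctr < m" "L \<subseteq> {..<m}" and cL: "ctr \<notin> L"
  shows "util b c \<gamma> m (gstar ctr L) ctr = real (card L) * (b 1 - c) + real (card (lpairs L)) * (\<gamma> * 2 * b 2)"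
proof -
  define g where "g = gstar ctr L"
  have E: "\<And>v k. {v,k} \<in> g \<Longrightarrow> (v = ctr \<and> k \<in> L) \<or> (v \<in> L \<and> k = ctr)"
    unfolding g_def using gstar_edge[OF cL] by blast
  have E2: "\<And>k. k \<in> L \<Longrightarrow> {ctr,k} \<in> g" "\<And>k. k \<in> L \<Longrightarrow> {k,ctr} \<in> g"
    unfolding g_def using gstar_edge[OF cL] by blast+
  have "{k. {ctr,k} \<in> g} = L" using E E2 cL by blast
  then have deg: "degree g ctr = card L" unfolding degree_def by simp
  have s2: "{w. w < m \<and> joined g ctr w \<and> gdist g ctr w > 1} = {}"
  proof -
    { fix w assume a: "joined g ctr w" "gdist g ctr w > 1"
      have "w \<noteq> ctr" using a gdist_self by (metis not_less_zero)
      then obtain k where "{w,k} \<in> g" using joined_nb2[OF a(1)] by metis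
      then have "w \<in> L" using E \<open>w \<noteq> ctr\<close> by blast
      then have "{ctr,w} \<in> g" using E2 by blast
      then have False using gdist_le[OF walk_edge, of ctr w g] a by simp }
    then show ?thesis by auto
  qed
  have s3: "{w. w < m \<and> joined g ctr w \<and> essential_set m g ctr w \<noteq> {}} = {}"
    using s2 ess_gdist by blast
  have pre: "{y,ctr} \<in> g \<and> {ctr,z} \<in> g \<and> y \<noteq> z \<and> {y,z} \<notin> g \<and> ctr < m \<and> ctr \<noteq> y \<and> ctr \<noteq> z
      \<and> (\<forall>k. {z,k} \<in> g \<longrightarrow> k = ctr)" if "y \<in> L" "z \<in> L" "y < z" for y z
    using that E E2 cL m(1) by (metis less_irrefl)
  have s4: "{(y, z). y < z \<and> z < m \<and> joined g y z \<and> ctr \<in> essential_set m g y z} = lpairs L"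
  proof (intro set_eqI iffI)
    fix p assume "p \<in> {(y, z). y < z \<and> z < m \<and> joined g y z \<and> ctr \<in> essential_set m g y z}"
    then obtain y z where p: "p = (y,z)" "y < z" "joined g y z" "ctr \<in> essential_set m g y z" by blast
    then have "ctr \<noteq> y" "ctr \<noteq> z" unfolding essential_set_def by auto
    moreover obtain k where "{y,k} \<in> g" using joined_nb1[OF p(3)] p(2) by blast
    moreover obtain k' where "{z,k'} \<in> g" using joined_nb2[OF p(3)] p(2) by blast
    ultimately have "y \<in> L" "z \<in> L" using E by metis+
    then show "p \<in> lpairs L" using p unfolding lpairs_def by auto
  next
    fix p assume "p \<in> lpairs L"
    then obtain y z where p: "p = (y,z)" "y < z" "y \<in> L" "z \<in> L" unfolding lpairs_def by blast
    have lp: "joined g y z" "essential_set m g y z = {ctr}"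
      using pre[OF p(3,4,2)] by (intro leafpair; auto)+
    then show "p \<in> {(y, z). y < z \<and> z < m \<and> joined g y z \<and> ctr \<in> essential_set m g y z}"
      using p m by auto
  qed
  have t: "\<And>y z. (y,z) \<in> lpairs L \<Longrightarrow> essential_set m g y z = {ctr} \<and> gdist g y z = 2"
  proof -
    fix y z assume "(y,z) \<in> lpairs L"
    then have p: "y < z" "y \<in> L" "z \<in> L" unfolding lpairs_def by auto
    show "essential_set m g y z = {ctr} \<and> gdist g y z = 2"
      using pre[OF p(2,3,1)] by (intro conjI leafpair; auto)
  qed
  have "(\<Sum>(y, z)\<in>lpairs L. \<gamma> / real (card (essential_set m g y z)) * 2 * b (gdist g y z))
      = (\<Sum>p\<in>lpairs L. \<gamma> * 2 * b 2)"
    by (rule sum.cong) (auto dest: t)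
  then show ?thesis unfolding util_def g_def[symmetric] deg s2 s3 s4 by simp
qed




lemma util_leafgen:
  assumes m: "ctr < m" "L \<subseteq> {..<m}" and cL: "ctr \<notin> L" and iL: "i \<in> L"
    and J: "J \<subseteq> L - {i}" and sub: "gstar ctr L \<subseteq> g"
    and E: "\<And>v k. {v,k} \<in> g \<Longrightarrow> (v = ctr \<and> k \<in> L) \<or> (v \<in> L \<and> k = ctr) \<or> (v = i \<and> k \<in> J) \<or> (v \<in> J \<and> k = i)"
    and EJ: "\<And>k. k \<in> J \<Longrightarrow> {i,k} \<in> g"
  shows "util b c \<gamma> m g i = (1 + real (card J)) * (b 1 - c)
      + real (card (L - {i} - J)) * b 2 - real (card (L - {i} - J)) * (\<gamma> * b 2)"
proof -
  have finL: "finite L" using m(2) finite_subset by blast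
  have E2: "\<And>k. k \<in> L \<Longrightarrow> {ctr,k} \<in> g" "\<And>k. k \<in> L \<Longrightarrow> {k,ctr} \<in> g"
    using sub gstar_edge[OF cL] by blast+
  have "{k. {i,k} \<in> g} = insert ctr J"
  proof (intro set_eqI iffI)
    fix k assume "k \<in> {k. {i,k} \<in> g}" then show "k \<in> insert ctr J" using E[of i k] iL cL J by auto
  next
    fix k assume "k \<in> insert ctr J" then show "k \<in> {k. {i,k} \<in> g}" using E2 EJ iL by auto
  qed
  moreover have "ctr \<notin> J" using J cL by auto
  moreover have "finite J" using J finL finite_subset by blast
  ultimately have deg: "degree g i = Suc (card J)" unfolding degree_def by simp
  have pre: "{i,ctr} \<in> g \<and> {ctr,w} \<in> g \<and> i \<noteq> w \<and> {i,w} \<notin> g \<and> ctr < m \<and> ctr \<noteq> i \<and> ctr \<noteq> w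
      \<and> (\<forall>k. {w,k} \<in> g \<longrightarrow> k = ctr)" if "w \<in> L - {i} - J" for w
  proof -
    have "{i,w} \<notin> g" using E[of i w] that cL J iL by auto
    moreover have "\<forall>k. {w,k} \<in> g \<longrightarrow> k = ctr" using E that cL J by blast
    ultimately show ?thesis using that E2 iL cL m(1) by auto
  qed
  have s2: "{w. w < m \<and> joined g i w \<and> gdist g i w > 1} = L - {i} - J"
  proof (intro set_eqI iffI)
    fix w assume "w \<in> {w. w < m \<and> joined g i w \<and> gdist g i w > 1}"
    then have a: "joined g i w" "gdist g i w > 1" by auto
    have "w \<noteq> i" using a gdist_self by (metis not_less_zero)
    moreover have "{i,w} \<notin> g" using a gdist_le[OF walk_edge, of i w g] by auto
    then have "w \<noteq> ctr" "w \<notin> J" using E2(2)[OF iL] EJ by auto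
    moreover obtain k where "{w,k} \<in> g" using joined_nb2[OF a(1)] \<open>w \<noteq> i\<close> by metis
    ultimately show "w \<in> L - {i} - J" using E[of w k] J by auto
  next
    fix w assume w: "w \<in> L - {i} - J"
    have "joined g i w" "gdist g i w = 2" using pre[OF w] by (intro leafpair; auto)+
    then show "w \<in> {w. w < m \<and> joined g i w \<and> gdist g i w > 1}"
      using w m(2) by auto
  qed
  have s3: "{w. w < m \<and> joined g i w \<and> essential_set m g i w \<noteq> {}} = L - {i} - J"
  proof (intro set_eqI iffI)
    fix w assume "w \<in> {w. w < m \<and> joined g i w \<and> essential_set m g i w \<noteq> {}}"
    then show "w \<in> L - {i} - J" using s2 ess_gdist by blast
  next
    fix w assume w: "w \<in> L - {i} - J"
    have "essential_set m g i w = {ctr}" using pre[OF w] by (intro leafpair; auto)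
    then show "w \<in> {w. w < m \<and> joined g i w \<and> essential_set m g i w \<noteq> {}}"
      using w s2 by auto
  qed
  have s4: "{(y, z). y < z \<and> z < m \<and> joined g y z \<and> i \<in> essential_set m g y z} = {}"
  proof -
    have nb: "\<And>v k. {v,k} \<in> g \<Longrightarrow> v \<noteq> i \<Longrightarrow> v \<in> insert ctr L" using E J by blast
    have "i \<noteq> ctr" using iL cL by auto
    then show ?thesis using nonessential[OF _ sub cL nb, of i] by auto
  qed
  have g2: "\<And>w. w \<in> L - {i} - J \<Longrightarrow> gdist g i w = 2" using pre by (intro leafpair; auto)
  have "(\<Sum>w\<in>L - {i} - J. b (gdist g i w)) = (\<Sum>w\<in>L - {i} - J. b 2)" by (rule sum.cong) (auto simp: g2)
  moreover have "(\<Sum>w\<in>L - {i} - J. \<gamma> * b (gdist g i w)) = (\<Sum>w\<in>L - {i} - J. \<gamma> * b 2)" by (rule sum.cong) (auto simp: g2)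
  ultimately show ?thesis unfolding util_def deg s2 s3 s4 by (simp add: algebra_simps)
qed

lemma util_leaf:
  assumes "ctr < m" "L \<subseteq> {..<m}" "ctr \<notin> L" "i \<in> L"
  shows "util b c \<gamma> m (gstar ctr L) i = (b 1 - c)
      + real (card (L - {i})) * b 2 - real (card (L - {i})) * (\<gamma> * b 2)"
  using util_leafgen[OF assms, of "{}" "gstar ctr L" b c \<gamma>] gstar_edge[OF assms(3)] by auto

lemma util_H:
  assumes "ctr < m" "L \<subseteq> {..<m}" "ctr \<notin> L" "i \<in> L" "j \<in> L" "i \<noteq> j"
  shows "util b c \<gamma> m (insert {i,j} (gstar ctr L)) i = 2 * (b 1 - c)
      + real (card (L - {i,j})) * b 2 - real (card (L - {i,j})) * (\<gamma> * b 2)"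
proof -
  have "L - {i} - {j} = L - {i,j}" by auto
  moreover have "\<And>v k. {v,k} \<in> insert {i,j} (gstar ctr L) \<Longrightarrow>
     (v = ctr \<and> k \<in> L) \<or> (v \<in> L \<and> k = ctr) \<or> (v = i \<and> k \<in> {j}) \<or> (v \<in> {j} \<and> k = i)"
    using gstar_edge[OF assms(3)] by (auto simp: doubleton_eq_iff)
  ultimately show ?thesis
    using util_leafgen[OF assms(1-4), of "{j}" "insert {i,j} (gstar ctr L)" b c \<gamma>] assms by auto
qed




lemma util_H2:
  assumes m: "ctr < n" "L \<subseteq> {..<n}" and cL: "ctr \<notin> L" and TL: "T \<in> L"
  shows "util b c \<gamma> (Suc n) (insert {n,T} (gstar ctr L)) n = (b 1 - c)
      + (b 2 + real (card (L - {T})) * b 3) - \<gamma> * (b 2 + real (card (L - {T})) * b 3)"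
proof -
  define g where "g = insert {n,T} (gstar ctr L)"
  have finL: "finite L" using m(2) finite_subset by blast
  have nL: "n \<notin> L" "n \<noteq> ctr" "n \<noteq> T" using m TL by auto
  have E: "\<And>v k. {v,k} \<in> g \<Longrightarrow> (v = ctr \<and> k \<in> L) \<or> (v \<in> L \<and> k = ctr) \<or> (v = n \<and> k = T) \<or> (v = T \<and> k = n)"
    unfolding g_def using gstar_edge[OF cL] by (auto simp: doubleton_eq_iff)
  have E2: "\<And>k. k \<in> L \<Longrightarrow> {ctr,k} \<in> g" "\<And>k. k \<in> L \<Longrightarrow> {k,ctr} \<in> g" "{n,T} \<in> g"
    unfolding g_def using gstar_edge[OF cL] by blast+
  have sub: "gstar ctr L \<subseteq> g" unfolding g_def by auto
  have nT: "\<And>k. {n,k} \<in> g \<Longrightarrow> k = T" using E nL by blast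
  have "{k. {n,k} \<in> g} = {T}" using nT E2(3) by blast
  then have deg: "degree g n = 1" unfolding degree_def by simp
  have TnL: "T \<noteq> ctr" using TL cL by auto
  have jc: "joined g n ctr" "gdist g n ctr = 2"
  proof -
    have w: "walk g n ctr [n,T,ctr]" by (rule walk_2[OF E2(3) E2(2)[OF TL]])
    then show "joined g n ctr" unfolding joined_def by blast
    have "{n,ctr} \<notin> g" using nT TnL by blast
    then show "gdist g n ctr = 2" by (rule gdist_eq2[OF E2(3) E2(2)[OF TL] nL(2)])
  qed
  have jw: "joined g n w" "gdist g n w = 3" if w: "w \<in> L - {T}" for w
  proof -
    have wa: "walk g n w [n,T,ctr,w]" using w TL by (intro walk_3 E2) auto
    then show j: "joined g n w" unfolding joined_def by blast
    have le: "gdist g n w \<le> 3" using gdist_le[OF wa] by simp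
    have "w \<noteq> n" using w nL by auto
    moreover have "{n,w} \<notin> g" using nT w by blast
    moreover have "\<not> (\<exists>x. {n,x} \<in> g \<and> {x,w} \<in> g)"
    proof
      assume "\<exists>x. {n,x} \<in> g \<and> {x,w} \<in> g"
      then have "{T,w} \<in> g" using nT by blast
      then show False using E[of T w] w cL TnL nL by auto
    qed
    ultimately show "gdist g n w = 3" using gdist_cases[OF j] le
      by (cases "gdist g n w") (auto simp: numeral_eq_Suc le_Suc_eq)
  qed
  define A where "A = insert ctr (L - {T})"
  have s2: "{w. w < Suc n \<and> joined g n w \<and> gdist g n w > 1} = A"
  proof (intro set_eqI iffI)
    fix w assume "w \<in> {w. w < Suc n \<and> joined g n w \<and> gdist g n w > 1}"
    then have a: "joined g n w" "gdist g n w > 1" by auto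
    have "w \<noteq> n" using a gdist_self by (metis not_less_zero)
    moreover have "w \<noteq> T" using a gdist_le[OF walk_edge[OF E2(3)]] by auto
    moreover obtain k where "{w,k} \<in> g" using joined_nb2[OF a(1)] \<open>w \<noteq> n\<close> by metis
    ultimately show "w \<in> A" using E[of w k] unfolding A_def by auto
  next
    fix w assume "w \<in> A"
    then show "w \<in> {w. w < Suc n \<and> joined g n w \<and> gdist g n w > 1}"
      unfolding A_def using jc jw m by auto
  qed
  have s3: "{w. w < Suc n \<and> joined g n w \<and> essential_set (Suc n) g n w \<noteq> {}} = A"
  proof (intro set_eqI iffI)
    fix w assume "w \<in> {w. w < Suc n \<and> joined g n w \<and> essential_set (Suc n) g n w \<noteq> {}}"
    then show "w \<in> A" using s2 ess_gdist by blast
  next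
    fix w assume w: "w \<in> A"
    then have "w \<noteq> T" "w \<noteq> n" unfolding A_def using TnL nL by auto
    then have "T \<in> essential_set (Suc n) g n w"
      unfolding essential_set_def using walk_start_nb[of g n w _ T] nT nL m TL by auto
    then show "w \<in> {w. w < Suc n \<and> joined g n w \<and> essential_set (Suc n) g n w \<noteq> {}}"
      using w s2 by auto
  qed
  have s4: "{(y, z). y < z \<and> z < Suc n \<and> joined g y z \<and> n \<in> essential_set (Suc n) g y z} = {}"
  proof -
    have nb: "\<And>v k. {v,k} \<in> g \<Longrightarrow> v \<noteq> n \<Longrightarrow> v \<in> insert ctr L" using E TL by blast
    then show ?thesis using nonessential[OF nL(2) sub cL nb] by auto
  qed
  have fA: "finite (L - {T})" using finL by auto
  have "(\<Sum>w\<in>A. b (gdist g n w)) = b 2 + (\<Sum>w\<in>L - {T}. b 3)"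
    unfolding A_def using fA cL jc jw by (simp add: sum.insert)
  moreover have "(\<Sum>w\<in>A. \<gamma> * b (gdist g n w)) = \<gamma> * (\<Sum>w\<in>A. b (gdist g n w))"
    by (simp add: sum_distrib_left)
  ultimately show ?thesis unfolding util_def g_def[symmetric] deg s2 s3 s4 by simp
qed




lemma is_star_iff: "is_star n g \<longleftrightarrow> (\<exists>ctr<n. g = gstar ctr ({..<n} - {ctr}))"
  unfolding is_star_def gstar_def by auto

lemma lpairs_mono: "L \<subseteq> L' \<Longrightarrow> lpairs L \<subseteq> lpairs L'"
  unfolding lpairs_def by auto

lemma lpairs_finite: "finite L \<Longrightarrow> finite (lpairs L)"
  by (rule finite_subset[of _ "L \<times> L"]) (auto simp: lpairs_def)

lemma gstar_remove: "gstar ctr L - {{ctr,k}} = gstar ctr (L - {k})"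
  unfolding gstar_def by (auto simp: doubleton_eq_iff)

lemma gstar_insert: "insert {n,ctr} (gstar ctr L) = gstar ctr (insert n L)"
  unfolding gstar_def by (auto simp: insert_commute)

lemma deg_center: "ctr \<notin> L \<Longrightarrow> degree (gstar ctr L) ctr = card L"
proof -
  assume cL: "ctr \<notin> L"
  have "{k. {ctr,k} \<in> gstar ctr L} = L" using gstar_edge[OF cL] cL by auto
  then show ?thesis unfolding degree_def by simp
qed

lemma deg_leaf: "ctr \<notin> L \<Longrightarrow> T \<in> L \<Longrightarrow> degree (gstar ctr L) T = 1"
proof -
  assume cL: "ctr \<notin> L" and T: "T \<in> L"
  have "{k. {T,k} \<in> gstar ctr L} = {ctr}" using gstar_edge[OF cL] cL T by auto
  then show ?thesis unfolding degree_def by simp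
qed



lemma star_stable:
  assumes cu: "c < b 1" and cl: "b 1 - b 2 + \<gamma> * b 2 \<le> c" and g0: "0 \<le> \<gamma>" "\<gamma> < 1" and b2: "b 2 > 0"
    and ctr: "ctr < n"
  shows "pairwise_stable b c \<gamma> n (gstar ctr ({..<n} - {ctr}))"
proof -
  define L where "L = {..<n} - {ctr}"
  have m: "L \<subseteq> {..<n}" "ctr \<notin> L" unfolding L_def by auto
  have finL: "finite L" unfolding L_def by auto
  have pos: "0 \<le> \<gamma> * 2 * b 2" "0 \<le> b 2 - \<gamma> * b 2" using g0 b2 by (auto simp: algebra_simps)
  have leafpos: "0 \<le> util b c \<gamma> n (gstar ctr L) k" if k: "k \<in> L" for k
  proof -
    have "0 \<le> real (card (L - {k})) * (b 2 - \<gamma> * b 2)" using pos by simp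
    then show ?thesis using util_leaf[OF ctr m k, of b c \<gamma>] cu by (simp add: algebra_simps)
  qed
  have del: "util b c \<gamma> n (gstar ctr L - {{ctr,k}}) ctr \<le> util b c \<gamma> n (gstar ctr L) ctr
       \<and> util b c \<gamma> n (gstar ctr L - {{ctr,k}}) k \<le> util b c \<gamma> n (gstar ctr L) k" if k: "k \<in> L" for k
  proof
    have m': "L - {k} \<subseteq> {..<n}" "ctr \<notin> L - {k}" using m by auto
    have "card L > 0" using finL k card_gt_0_iff by blast
    then have c1: "real (card (L - {k})) = real (card L) - 1"
      by (simp add: card_Diff_singleton[OF k] of_nat_diff)
    have "card (lpairs (L - {k})) \<le> card (lpairs L)"
      by (rule card_mono[OF lpairs_finite[OF finL] lpairs_mono]) blast
    then have c2: "real (card (lpairs (L - {k}))) \<le> real (card (lpairs L))" by simp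
    have c3: "real (card (lpairs (L - {k}))) * (\<gamma> * 2 * b 2) \<le> real (card (lpairs L)) * (\<gamma> * 2 * b 2)"
      using mult_right_mono[OF c2 pos(1)] .
    have u1: "util b c \<gamma> n (gstar ctr (L - {k})) ctr = real (card (L - {k})) * (b 1 - c) + real (card (lpairs (L - {k}))) * (\<gamma> * 2 * b 2)"
      by (rule util_center[OF ctr m'])
    have u2: "util b c \<gamma> n (gstar ctr L) ctr = real (card L) * (b 1 - c) + real (card (lpairs L)) * (\<gamma> * 2 * b 2)"
      by (rule util_center[OF ctr m])
    have d: "(real (card L) - 1) * (b 1 - c) = real (card L) * (b 1 - c) - (b 1 - c)" by (simp add: left_diff_distrib)
    show "util b c \<gamma> n (gstar ctr L - {{ctr,k}}) ctr \<le> util b c \<gamma> n (gstar ctr L) ctr"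
      unfolding gstar_remove u1 u2 c1 d using c3 cu by linarith
    have "\<not> (\<exists>x. {k,x} \<in> gstar ctr (L - {k}))" using gstar_edge[OF m'(2)] m k by (simp; blast)
    then show "util b c \<gamma> n (gstar ctr L - {{ctr,k}}) k \<le> util b c \<gamma> n (gstar ctr L) k"
      unfolding gstar_remove using util_isolated[of k "gstar ctr (L - {k})" b c \<gamma> n] leafpos[OF k] by simp
  qed
  show ?thesis
    unfolding pairwise_stable_def L_def[symmetric]
  proof (rule conjI; intro allI impI)
    fix i j assume e: "{i,j} \<in> gstar ctr L"
    then have "(i = ctr \<and> j \<in> L) \<or> (i \<in> L \<and> j = ctr)" using gstar_edge[OF m(2)] by blast
    then show "util b c \<gamma> n (gstar ctr L - {{i, j}}) i \<le> util b c \<gamma> n (gstar ctr L) i \<and>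
               util b c \<gamma> n (gstar ctr L - {{i, j}}) j \<le> util b c \<gamma> n (gstar ctr L) j"
    proof (elim disjE)
      assume "i = ctr \<and> j \<in> L" then show ?thesis using del[of j] by blast
    next
      assume h: "i \<in> L \<and> j = ctr"
      then have "{i,j} = {ctr,i}" by auto
      then show ?thesis using del[of i] h by simp
    qed
  next
    fix i j assume a: "i < n" "j < n" "i \<noteq> j" "{i, j} \<notin> gstar ctr L"
      "util b c \<gamma> n (gstar ctr L) i < util b c \<gamma> n (insert {i, j} (gstar ctr L)) i"
    have iL: "i \<in> L" "j \<in> L" using a(1-4) gstar_edge[OF m(2)] unfolding L_def by auto
    have cc: "real (card (L - {i})) = real (card (L - {i,j})) + 1"
    proof -
      have "L - {i} = insert j (L - {i,j})" using iL a(3) by auto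
      then show ?thesis using finL by simp
    qed
    have "util b c \<gamma> n (insert {i, j} (gstar ctr L)) i \<le> util b c \<gamma> n (gstar ctr L) i"
      unfolding util_H[OF ctr m iL a(3)] util_leaf[OF ctr m iL(1)] cc using cl by (simp add: algebra_simps)
    then show "util b c \<gamma> n (insert {i, j} (gstar ctr L)) j < util b c \<gamma> n (gstar ctr L) j"
      using a(5) by simp
  qed
qed




lemma enter_star:
  assumes cu: "c < b 1" and cl: "b 1 - b 2 + \<gamma> * b 2 \<le> c" and g0: "0 \<le> \<gamma>" "\<gamma> < 1" and b2: "b 2 > 0"
    and c0b: "c0 < (1 - \<gamma>) * (b 2 - b 3)"
    and st: "is_star n g"
    and fe: "entry_feasible b c \<gamma> n g T"
    and mx: "\<forall>T'. entry_feasible b c \<gamma> n g T' \<longrightarrow> entry_util b c \<gamma> c0 n g T' \<le> entry_util b c \<gamma> c0 n g T"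
  shows "is_star (Suc n) (insert {n, T} g)"
proof -
  obtain ctr where ctr: "ctr < n" and g: "g = gstar ctr ({..<n} - {ctr})" using st is_star_iff by blast
  define L where "L = {..<n} - {ctr}"
  have m: "L \<subseteq> {..<n}" "ctr \<notin> L" unfolding L_def by auto
  have finL: "finite L" unfolding L_def by auto
  have cardL: "card L = n - 1" unfolding L_def using ctr by (simp add: card_Diff_singleton)
  have T: "T < n" using fe unfolding entry_feasible_def by blast
  show ?thesis
  proof (cases "T = ctr")
    case True
    have "insert {n,T} g = gstar ctr (insert n L)" unfolding g L_def[symmetric] True gstar_insert ..
    moreover have "insert n L = {..<Suc n} - {ctr}" unfolding L_def using ctr by auto
    ultimately have "insert {n,T} g = gstar ctr ({..<Suc n} - {ctr})" by simp
    moreover have "ctr < Suc n" using ctr by simp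
    ultimately show ?thesis unfolding is_star_iff by blast
  next
    case False
    then have TL: "T \<in> L" unfolding L_def using T by auto
    have n2: "n \<ge> 2" using T ctr False by linarith
    show ?thesis
    proof (cases "n = 2")
      case True
      have L1: "L = {T}" using TL ctr T True False unfolding L_def by auto
      have ctrT: "ctr = 1 - T" "T < 2" using T ctr False True by auto
      have gL: "g = gstar ctr L" unfolding g L_def ..
      have "gstar ctr {T} = {{T,ctr}}" unfolding gstar_def by (auto simp: insert_commute)
      then have "insert {n,T} g = {{T,2},{T,ctr}}" unfolding gL L1 True by (simp add: insert_commute)
      moreover have "gstar T ({..<3} - {T}) = {{T,2},{T,ctr}}"
      proof -
        have "{..<3} - {T} = {ctr, 2}" using ctrT by (cases "T = 0") (auto simp: lessThan_def)
        moreover have "gstar T {ctr, 2} = {{T,ctr},{T,2}}" unfolding gstar_def by auto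
        ultimately show ?thesis by (simp add: insert_commute)
      qed
      ultimately have "insert {n,T} g = gstar T ({..<Suc n} - {T})" using True by (simp add: numeral_eq_Suc)
      moreover have "T < Suc n" using T by simp
      ultimately show ?thesis unfolding is_star_iff by blast
    next
      case False
      then have n3: "n \<ge> 3" using n2 by auto
      have m1: "insert n L \<subseteq> {..<Suc n}" "ctr \<notin> insert n L" using m ctr by auto
      have ctrS: "ctr < Suc n" using ctr by auto
      have finL': "finite (insert n L)" using finL by auto
      have "card (lpairs L) \<le> card (lpairs (insert n L))"
        by (rule card_mono[OF lpairs_finite[OF finL'] lpairs_mono]) blast
      then have cp: "real (card (lpairs L)) * (\<gamma> * 2 * b 2) \<le> real (card (lpairs (insert n L))) * (\<gamma> * 2 * b 2)"
        using g0 b2 by (intro mult_right_mono) auto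
      have nL: "n \<notin> L" using m by auto
      have cins: "real (card (insert n L)) = real (card L) + 1" using finL nL by simp
      have u1: "util b c \<gamma> (Suc n) (gstar ctr (insert n L)) ctr = real (card (insert n L)) * (b 1 - c) + real (card (lpairs (insert n L))) * (\<gamma> * 2 * b 2)"
        by (rule util_center[OF ctrS m1])
      have u2: "util b c \<gamma> n (gstar ctr L) ctr = real (card L) * (b 1 - c) + real (card (lpairs L)) * (\<gamma> * 2 * b 2)"
        by (rule util_center[OF ctr m])
      have d: "(real (card L) + 1) * (b 1 - c) = real (card L) * (b 1 - c) + (b 1 - c)" by (simp add: distrib_right)
      have "util b c \<gamma> n g ctr \<le> util b c \<gamma> (Suc n) (insert {n, ctr} g) ctr"
        unfolding g L_def[symmetric] gstar_insert u1 u2 cins d using cp cu by linarith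
      then have feC: "entry_feasible b c \<gamma> n g ctr" unfolding entry_feasible_def using ctr by auto
      have le: "entry_util b c \<gamma> c0 n g ctr \<le> entry_util b c \<gamma> c0 n g T" using mx feC by blast
      have nins: "insert n L - {n} = L" using nL by auto
      have eC: "entry_util b c \<gamma> c0 n g ctr = - c0 * real (card L) + ((b 1 - c)
          + real (card L) * b 2 - real (card L) * (\<gamma> * b 2))"
        unfolding entry_util_def g L_def[symmetric] deg_center[OF m(2)] gstar_insert
        using util_leaf[OF ctrS m1 insertI1, of b c \<gamma>] nins by simp
      have eT: "entry_util b c \<gamma> c0 n g T = - c0 * 1 + ((b 1 - c)
          + (b 2 + real (card (L - {T})) * b 3) - \<gamma> * (b 2 + real (card (L - {T})) * b 3))"
        unfolding entry_util_def g L_def[symmetric] deg_leaf[OF m(2) TL]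
        using util_H2[OF ctr m TL, of b c \<gamma>] by simp
      define K where "K = real (card L) - 1"
      have "card L > 0" using finL TL card_gt_0_iff by blast
      then have cLT: "real (card (L - {T})) = K" unfolding K_def
        by (simp add: card_Diff_singleton[OF TL] of_nat_diff)
      have Kp: "K > 0" unfolding K_def cardL using n3 by auto
      have pos: "K * ((1 - \<gamma>) * (b 2 - b 3) - c0) > 0" using Kp c0b by simp
      have "entry_util b c \<gamma> c0 n g ctr - entry_util b c \<gamma> c0 n g T = K * ((1 - \<gamma>) * (b 2 - b 3) - c0)"
        unfolding eC eT cLT by (simp add: K_def algebra_simps)
      then show ?thesis using le pos by linarith
    qed
  qed
qed

lemma reach_star:
  assumes cu: "c < b 1" and cl: "b 1 - b 2 + \<gamma> * b 2 \<le> c" and g0: "0 \<le> \<gamma>" "\<gamma> < 1" and b2: "b 2 > 0"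
    and c0b: "c0 < (1 - \<gamma>) * (b 2 - b 3)"
  shows "(n, g) \<in> reachable b c \<gamma> c0 \<Longrightarrow> is_star n g"
proof (induction rule: reachable.induct)
  case start
  have "gstar 0 ({..<1} - {0}) = {}" unfolding gstar_def by auto
  then show ?case unfolding is_star_iff by (intro exI[of _ 0]) simp
next
  case (move n g g')
  then obtain ctr where "ctr < n" "g = gstar ctr ({..<n} - {ctr})" using is_star_iff by blast
  then have "pairwise_stable b c \<gamma> n g" using star_stable[OF cu cl g0 b2] by blast
  then show ?case using move by blast
next
  case (enter n g T)
  show ?case by (rule enter_star[OF cu cl g0 b2 c0b enter.IH enter.hyps(3) enter.hyps(5)])
qed


theorem theorem1:
  fixes b :: "nat \<Rightarrow> real" and c \<gamma> c0 :: real
  assumes b_dec: "\<And>i. i \<ge> 1 \<Longrightarrow> b (Suc i) < b i"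
    and b_pos: "\<And>i. i \<ge> 1 \<Longrightarrow> b i > 0"
    and gamma: "0 \<le> \<gamma>" "\<gamma> < 1"
    and c_lower: "b 1 - b 2 + \<gamma> * b 2 \<le> c"
    and c_upper: "c < b 1"
    and c0_bound: "c0 < (1 - \<gamma>) * (b 2 - b 3)"
  shows "\<forall>n g. (n, g) \<in> reachable b c \<gamma> c0 \<longrightarrow> pairwise_stable b c \<gamma> n g \<longrightarrow> is_star n g"
proof (intro allI impI)
  fix n g assume "(n, g) \<in> reachable b c \<gamma> c0"
  moreover have "b 2 > 0" using b_pos[of 2] by simp
  ultimately show "is_star n g" using reach_star[OF c_upper c_lower gamma] c0_bound by blast
qed

end
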